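(* Let $G$ and $H$ be graphs, let $H_{ni}$ be the set of non-isolated vertices of $H$, and for $y\in H_{ni}$ let $N_y$ be the induced subgraph of $H$ on the vertices adjacent to $y$. Then $$\mathcal A_{lc}(\Sigma G,H)\cong\bigoplus_{y\in H_{ni}}\mathcal A_{lc}(G,N_y).$$ In particular, if $H$ is vertex transitive and $y$ is any vertex of $H$ with neighborhood $N$, then $\mathcal A_{lc}(\Sigma G,H)\cong\mathcal A_{lc}(G,N)^{|H|}$ (the direct sum of $|V(H)|$ copies).
   Context: Graphs are finite with symmetric edge sets; write $v\sim w$ for adjacency. The suspension $\Sigma G$ is obtained from $G$ by adding one new vertex adjacent to every vertex of $G$. For graphs $G,H$, $\mathcal A_{lc}(G,H)$ is the unital complex algebra generated by $e_{v,x}$ ($v\in V(G)$, $x\in V(H)$) with relations: $\sum_{x}e_{v,x}=1$; $e_{v,x}^2=e_{v,x}$; $e_{v,x}e_{v,y}=0$ for $x\ne y$; $e_{v,x}e_{w,y}=0$ if $v\sim w$ and $x\not\sim y$; $e_{v,x}e_{w,y}=e_{w,y}e_{v,x}$ if $v\sim w$. *)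

theory Defs
  imports Complex_Main
begin

text \<open>A (finite) graph is a finite vertex set V with a symmetric adjacency
relation E supported on V.  Loops are permitted (the paper only requires
symmetric edge sets).\<close>

definition graph :: "'a set \<Rightarrow> ('a \<Rightarrow> 'a \<Rightarrow> bool) \<Rightarrow> bool" where
  "graph V E \<longleftrightarrow> finite V \<and> (\<forall>v w. E v w \<longrightarrow> v \<in> V \<and> w \<in> V \<and> E w v)"

text \<open>Suspension: new vertex None adjacent to every (old) vertex Some v.\<close>

definition susp_V :: "'a set \<Rightarrow> 'a option set" where
  "susp_V V = insert None (Some ` V)"

definition susp_E :: "'a set \<Rightarrow> ('a \<Rightarrow> 'a \<Rightarrow> bool) \<Rightarrow> 'a option \<Rightarrow> 'a option \<Rightarrow> bool" where
  "susp_E V E a b = (case (a, b) of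
       (Some v, Some w) \<Rightarrow> E v w
     | (None, Some w) \<Rightarrow> w \<in> V
     | (Some v, None) \<Rightarrow> v \<in> V
     | (None, None) \<Rightarrow> False)"

definition nbhd_V :: "'b set \<Rightarrow> ('b \<Rightarrow> 'b \<Rightarrow> bool) \<Rightarrow> 'b \<Rightarrow> 'b set" where
  "nbhd_V W F y = {x \<in> W. F y x}"

definition nbhd_E :: "'b set \<Rightarrow> ('b \<Rightarrow> 'b \<Rightarrow> bool) \<Rightarrow> 'b \<Rightarrow> 'b \<Rightarrow> 'b \<Rightarrow> bool" where
  "nbhd_E W F y a b \<longleftrightarrow> F a b \<and> a \<in> nbhd_V W F y \<and> b \<in> nbhd_V W F y"

definition non_isolated :: "'b set \<Rightarrow> ('b \<Rightarrow> 'b \<Rightarrow> bool) \<Rightarrow> 'b set" where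
  "non_isolated W F = {y \<in> W. \<exists>x. F y x}"

definition vertex_transitive :: "'b set \<Rightarrow> ('b \<Rightarrow> 'b \<Rightarrow> bool) \<Rightarrow> bool" where
  "vertex_transitive W F \<longleftrightarrow>
     (\<forall>y\<in>W. \<forall>y'\<in>W. \<exists>\<sigma>. bij_betw \<sigma> W W \<and> (\<forall>a\<in>W. \<forall>b\<in>W. F a b \<longleftrightarrow> F (\<sigma> a) (\<sigma> b)) \<and> \<sigma> y = y')"

text \<open>An element of the free unital complex algebra on generators of type 'g is a
finitely supported function from words to coefficients.\<close>

type_synonym 'g ncpoly = "'g list \<Rightarrow> complex"

definition nc_polys :: "'g set \<Rightarrow> 'g ncpoly set" where
  "nc_polys Gen = {p. finite {w. p w \<noteq> 0} \<and> (\<forall>w. p w \<noteq> 0 \<longrightarrow> set w \<subseteq> Gen)}"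

definition padd :: "'g ncpoly \<Rightarrow> 'g ncpoly \<Rightarrow> 'g ncpoly" where
  "padd p q = (\<lambda>w. p w + q w)"

definition psmul :: "complex \<Rightarrow> 'g ncpoly \<Rightarrow> 'g ncpoly" where
  "psmul c p = (\<lambda>w. c * p w)"

definition pmul :: "'g ncpoly \<Rightarrow> 'g ncpoly \<Rightarrow> 'g ncpoly" where
  "pmul p q = (\<lambda>w. \<Sum>k\<in>{0..length w}. p (take k w) * q (drop k w))"

definition pone :: "'g ncpoly" where
  "pone = (\<lambda>w. if w = [] then 1 else 0)"

definition pgen :: "'g \<Rightarrow> 'g ncpoly" where
  "pgen g = (\<lambda>w. if w = [g] then 1 else 0)"

definition psub :: "'g ncpoly \<Rightarrow> 'g ncpoly \<Rightarrow> 'g ncpoly" where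
  "psub p q = (\<lambda>w. p w - q w)"

inductive_set ideal_gen :: "'g ncpoly set \<Rightarrow> 'g ncpoly set \<Rightarrow> 'g ncpoly set"
  for C R where
  zero: "(\<lambda>_. 0) \<in> ideal_gen C R"
| gen: "r \<in> R \<Longrightarrow> a \<in> C \<Longrightarrow> b \<in> C \<Longrightarrow> pmul (pmul a r) b \<in> ideal_gen C R"
| add: "p \<in> ideal_gen C R \<Longrightarrow> q \<in> ideal_gen C R \<Longrightarrow> padd p q \<in> ideal_gen C R"

text \<open>An algebra presented as a quotient: a carrier of representatives, an ideal
(representatives of zero), and the algebra operations on representatives.\<close>

record 'e qalg =
  carr :: "'e set"
  idl :: "'e set"
  plus :: "'e \<Rightarrow> 'e \<Rightarrow> 'e"
  mult :: "'e \<Rightarrow> 'e \<Rightarrow> 'e"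
  scal :: "complex \<Rightarrow> 'e \<Rightarrow> 'e"
  unit :: "'e"

definition qsub :: "('e, 'm) qalg_scheme \<Rightarrow> 'e \<Rightarrow> 'e \<Rightarrow> 'e" where
  "qsub A a b = plus A a (scal A (-1) b)"

definition presented :: "'g set \<Rightarrow> 'g ncpoly set \<Rightarrow> 'g ncpoly qalg" where
  "presented Gen R = \<lparr> carr = nc_polys Gen, idl = ideal_gen (nc_polys Gen) R,
      plus = padd, mult = pmul, scal = psmul, unit = pone \<rparr>"

text \<open>Isomorphism of unital complex algebras C1/I1 and C2/I2, expressed on
representatives: a map that is well defined and injective modulo the ideals,
surjective modulo the ideal, and a unital complex-algebra homomorphism modulo
the ideal.\<close>

definition qalg_iso :: "'e qalg \<Rightarrow> 'f qalg \<Rightarrow> bool" where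
  "qalg_iso A B \<longleftrightarrow> (\<exists>\<phi>.
     (\<forall>a\<in>carr A. \<phi> a \<in> carr B) \<and>
     (\<forall>a\<in>carr A. \<forall>b\<in>carr A. qsub A a b \<in> idl A \<longleftrightarrow> qsub B (\<phi> a) (\<phi> b) \<in> idl B) \<and>
     (\<forall>b\<in>carr B. \<exists>a\<in>carr A. qsub B (\<phi> a) b \<in> idl B) \<and>
     (\<forall>a\<in>carr A. \<forall>b\<in>carr A. qsub B (\<phi> (plus A a b)) (plus B (\<phi> a) (\<phi> b)) \<in> idl B) \<and>
     (\<forall>a\<in>carr A. \<forall>b\<in>carr A. qsub B (\<phi> (mult A a b)) (mult B (\<phi> a) (\<phi> b)) \<in> idl B) \<and>
     (\<forall>c. \<forall>a\<in>carr A. qsub B (\<phi> (scal A c a)) (scal B c (\<phi> a)) \<in> idl B) \<and>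
     qsub B (\<phi> (unit A)) (unit B) \<in> idl B)"

definition dsum :: "'y set \<Rightarrow> ('y \<Rightarrow> 'e qalg) \<Rightarrow> ('y \<Rightarrow> 'e) qalg" where
  "dsum S A = \<lparr>
     carr = {f. (\<forall>y\<in>S. f y \<in> carr (A y)) \<and> (\<forall>y. y \<notin> S \<longrightarrow> f y = undefined)},
     idl = {f. (\<forall>y\<in>S. f y \<in> idl (A y)) \<and> (\<forall>y. y \<notin> S \<longrightarrow> f y = undefined)},
     plus = (\<lambda>f g y. if y \<in> S then plus (A y) (f y) (g y) else undefined),
     mult = (\<lambda>f g y. if y \<in> S then mult (A y) (f y) (g y) else undefined),
     scal = (\<lambda>c f y. if y \<in> S then scal (A y) c (f y) else undefined),
     unit = (\<lambda>y. if y \<in> S then unit (A y) else undefined) \<rparr>"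

definition lc_rels :: "'a set \<Rightarrow> ('a \<Rightarrow> 'a \<Rightarrow> bool) \<Rightarrow> 'b set \<Rightarrow> ('b \<Rightarrow> 'b \<Rightarrow> bool)
    \<Rightarrow> ('a \<times> 'b) ncpoly set" where
  "lc_rels V E W F =
     {psub (\<lambda>u. \<Sum>x\<in>W. pgen (v, x) u) pone | v. v \<in> V}
   \<union> {psub (pmul (pgen (v, x)) (pgen (v, x))) (pgen (v, x)) | v x. v \<in> V \<and> x \<in> W}
   \<union> {pmul (pgen (v, x)) (pgen (v, y)) | v x y. v \<in> V \<and> x \<in> W \<and> y \<in> W \<and> x \<noteq> y}
   \<union> {pmul (pgen (v, x)) (pgen (w, y)) | v w x y.
        v \<in> V \<and> w \<in> V \<and> x \<in> W \<and> y \<in> W \<and> E v w \<and> \<not> F x y}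
   \<union> {psub (pmul (pgen (v, x)) (pgen (w, y))) (pmul (pgen (w, y)) (pgen (v, x))) | v w x y.
        v \<in> V \<and> w \<in> V \<and> x \<in> W \<and> y \<in> W \<and> E v w}"

definition A_lc :: "'a set \<Rightarrow> ('a \<Rightarrow> 'a \<Rightarrow> bool) \<Rightarrow> 'b set \<Rightarrow> ('b \<Rightarrow> 'b \<Rightarrow> bool)
    \<Rightarrow> ('a \<times> 'b) ncpoly qalg" where
  "A_lc V E W F = presented (V \<times> W) (lc_rels V E W F)"

end

theory Submission
  imports Defs
begin


abbreviation zp :: "'g ncpoly" where "zp \<equiv> (\<lambda>_. 0)"

lemma pmul_Nil: "pmul p q [] = p [] * q []"
  by (simp add: pmul_def)
lemma pmul_Cons: "pmul p q (a#w) = p [] * q (a#w) + pmul (\<lambda>u. p (a#u)) q w"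
  unfolding pmul_def length_Cons sum.atLeast0_atMost_Suc_shift by simp

lemma pmul_padd_left: "pmul (padd p q) r = padd (pmul p r) (pmul q r)"
  by (rule ext) (simp add: pmul_def padd_def sum.distrib algebra_simps)
lemma pmul_padd_right: "pmul r (padd p q) = padd (pmul r p) (pmul r q)"
  by (rule ext) (simp add: pmul_def padd_def sum.distrib algebra_simps)
lemma pmul_psmul_left: "pmul (psmul c p) r = psmul c (pmul p r)"
  by (rule ext) (simp add: pmul_def psmul_def sum_distrib_left algebra_simps)
lemma pmul_psmul_right: "pmul r (psmul c p) = psmul c (pmul r p)"
  by (rule ext) (simp add: pmul_def psmul_def sum_distrib_left algebra_simps)
lemma pmul_psub_left: "pmul (psub p q) r = psub (pmul p r) (pmul q r)"
  by (rule ext) (simp add: pmul_def psub_def sum_subtractf algebra_simps)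
lemma pmul_psub_right: "pmul r (psub p q) = psub (pmul r p) (pmul r q)"
  by (rule ext) (simp add: pmul_def psub_def sum_subtractf algebra_simps)
lemma pmul_zero_left[simp]: "pmul zp r = zp"
  by (rule ext) (simp add: pmul_def)
lemma pmul_zero_right[simp]: "pmul r zp = zp"
  by (rule ext) (simp add: pmul_def)
lemma pmul_sum_left: "pmul (\<lambda>w. \<Sum>i\<in>S. f i w) r = (\<lambda>w. \<Sum>i\<in>S. pmul (f i) r w)"
  by (rule ext) (simp add: pmul_def sum_distrib_right, rule sum.swap)
lemma pmul_sum_right: "pmul r (\<lambda>w. \<Sum>i\<in>S. f i w) = (\<lambda>w. \<Sum>i\<in>S. pmul r (f i) w)"
  by (rule ext) (simp add: pmul_def sum_distrib_left, rule sum.swap)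

lemma pmul_pone_left[simp]: "pmul pone q = q"
proof (rule ext)
  fix w show "pmul pone q w = q w"
  proof (cases w)
    case Nil then show ?thesis by (simp add: pmul_Nil pone_def)
  next
    case (Cons a w')
    have "(\<lambda>u. pone (a#u)) = zp" by (simp add: pone_def)
    then show ?thesis using Cons by (simp add: pmul_Cons pone_def)
  qed
qed

lemma pmul_pone_right[simp]: "pmul q pone = q"
proof (rule ext)
  fix w show "pmul q pone w = q w"
  proof (induction w arbitrary: q)
    case Nil then show ?case by (simp add: pmul_Nil pone_def)
  next
    case (Cons a w)
    then show ?case by (simp add: pmul_Cons pone_def)
  qed
qed

lemma pmul_lin1: "pmul (\<lambda>u. c * p u + q u) r w = c * pmul p r w + pmul q r w"
  by (simp add: pmul_def sum.distrib sum_distrib_left algebra_simps)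

lemma pmul_assoc: "pmul (pmul p q) r = pmul p (pmul q r)"
proof (rule ext)
  fix w show "pmul (pmul p q) r w = pmul p (pmul q r) w"
  proof (induction w arbitrary: p)
    case Nil then show ?case by (simp add: pmul_Nil)
  next
    case (Cons a w)
    have e: "(\<lambda>u. pmul p q (a#u)) = (\<lambda>u. p [] * q (a#u) + pmul (\<lambda>u. p (a#u)) q u)"
      by (simp add: pmul_Cons)
    show ?case
      by (simp add: pmul_Cons e pmul_lin1 Cons pmul_Nil algebra_simps)
  qed
qed

definition mon :: "'g list \<Rightarrow> 'g ncpoly" where
  "mon u = (\<lambda>w. if w = u then 1 else 0)"

lemma mono_Nil: "mon [] = pone" by (simp add: mon_def pone_def)

lemma pmul_pgen: "pmul (pgen a) q = (\<lambda>w. case w of [] \<Rightarrow> 0 | b#w' \<Rightarrow> if b = a then q w' else 0)"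
proof (rule ext)
  fix w show "pmul (pgen a) q w = (case w of [] \<Rightarrow> 0 | b#w' \<Rightarrow> if b = a then q w' else 0)"
  proof (cases w)
    case Nil then show ?thesis by (simp add: pmul_Nil pgen_def)
  next
    case (Cons b w')
    have "(\<lambda>u. pgen a (b#u)) = (if b = a then pone else zp)"
      by (auto simp: pgen_def pone_def)
    then show ?thesis using Cons by (simp add: pmul_Cons pgen_def)
  qed
qed

lemma mono_Cons: "mon (a#u) = pmul (pgen a) (mon u)"
  by (rule ext) (auto simp: pmul_pgen mon_def split: list.split)

lemma pmul_mono: "pmul (mon u) (mon v) = mon (u @ v)"
  by (induction u) (simp_all add: mono_Nil mono_Cons pmul_assoc)




section \<open>Carriers\<close>

lemma nc_polysI: "finite {w. p w \<noteq> 0} \<Longrightarrow> (\<And>w. p w \<noteq> 0 \<Longrightarrow> set w \<subseteq> G) \<Longrightarrow> p \<in> nc_polys G"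
  by (auto simp: nc_polys_def)
lemma nc_polys_fin: "p \<in> nc_polys G \<Longrightarrow> finite {w. p w \<noteq> 0}"
  by (auto simp: nc_polys_def)
lemma nc_polys_set: "p \<in> nc_polys G \<Longrightarrow> p w \<noteq> 0 \<Longrightarrow> set w \<subseteq> G"
  by (auto simp: nc_polys_def)
lemma nc_polys_mono_G: "p \<in> nc_polys G \<Longrightarrow> G \<subseteq> G' \<Longrightarrow> p \<in> nc_polys G'"
  by (auto simp: nc_polys_def)

lemma zp_nc[simp]: "zp \<in> nc_polys G" by (auto simp: nc_polys_def)
lemma pone_nc[simp]: "pone \<in> nc_polys G" by (auto simp: nc_polys_def pone_def)
lemma pgen_nc: "a \<in> G \<Longrightarrow> pgen a \<in> nc_polys G" by (auto simp: nc_polys_def pgen_def)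
lemma mono_nc: "set u \<subseteq> G \<Longrightarrow> mon u \<in> nc_polys G" by (auto simp: nc_polys_def mon_def)

lemma padd_nc: "p \<in> nc_polys G \<Longrightarrow> q \<in> nc_polys G \<Longrightarrow> padd p q \<in> nc_polys G"
proof (rule nc_polysI)
  assume a: "p \<in> nc_polys G" "q \<in> nc_polys G"
  have "{w. padd p q w \<noteq> 0} \<subseteq> {w. p w \<noteq> 0} \<union> {w. q w \<noteq> 0}" by (auto simp: padd_def)
  moreover have "finite ({w. p w \<noteq> 0} \<union> {w. q w \<noteq> 0})" using nc_polys_fin[OF a(1)] nc_polys_fin[OF a(2)] by simp
  ultimately show "finite {w. padd p q w \<noteq> 0}" by (rule finite_subset)
  fix w assume "padd p q w \<noteq> 0" then have "p w \<noteq> 0 \<or> q w \<noteq> 0" by (auto simp: padd_def)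
  then show "set w \<subseteq> G" using nc_polys_set[OF a(1)] nc_polys_set[OF a(2)] by blast
qed
lemma psmul_nc: "p \<in> nc_polys G \<Longrightarrow> psmul c p \<in> nc_polys G"
proof (rule nc_polysI)
  assume a: "p \<in> nc_polys G"
  have "{w. psmul c p w \<noteq> 0} \<subseteq> {w. p w \<noteq> 0}" by (auto simp: psmul_def)
  then show "finite {w. psmul c p w \<noteq> 0}" using a nc_polys_fin finite_subset by blast
  fix w assume "psmul c p w \<noteq> 0" then have "p w \<noteq> 0" by (auto simp: psmul_def)
  then show "set w \<subseteq> G" using nc_polys_set[OF a] by blast
qed
lemma psub_nc: "p \<in> nc_polys G \<Longrightarrow> q \<in> nc_polys G \<Longrightarrow> psub p q \<in> nc_polys G"
proof -
  assume a: "p \<in> nc_polys G" "q \<in> nc_polys G"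
  have "psub p q = padd p (psmul (-1) q)" by (rule ext) (simp add: psub_def padd_def psmul_def)
  then show ?thesis using a by (simp add: padd_nc psmul_nc)
qed

lemma pmul_nz: assumes "pmul p q w \<noteq> 0" shows "\<exists>u v. w = u @ v \<and> p u \<noteq> 0 \<and> q v \<noteq> 0"
proof -
  have "\<exists>k\<in>{0..length w}. p (take k w) * q (drop k w) \<noteq> 0"
  proof (rule ccontr)
    assume "\<not> ?thesis"
    then have "pmul p q w = 0" unfolding pmul_def by (intro sum.neutral) blast
    then show False using assms by simp
  qed
  then obtain k where k: "p (take k w) \<noteq> 0" "q (drop k w) \<noteq> 0" by auto
  show ?thesis
  proof (intro exI conjI)
    show "w = take k w @ drop k w" by (rule append_take_drop_id[symmetric])
  qed (rule k)+
qed

lemma pmul_nc: assumes a: "p \<in> nc_polys G" "q \<in> nc_polys G" shows "pmul p q \<in> nc_polys G"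
proof (rule nc_polysI)
  have "{w. pmul p q w \<noteq> 0} \<subseteq> (\<lambda>(u,v). u @ v) ` ({w. p w \<noteq> 0} \<times> {w. q w \<noteq> 0})"
  proof
    fix w assume "w \<in> {w. pmul p q w \<noteq> 0}"
    then obtain u v where "w = u @ v" "p u \<noteq> 0" "q v \<noteq> 0" using pmul_nz by blast
    then show "w \<in> (\<lambda>(u,v). u @ v) ` ({w. p w \<noteq> 0} \<times> {w. q w \<noteq> 0})"
      by (intro image_eqI[where x="(u,v)"]) auto
  qed
  moreover have "finite ((\<lambda>(u,v). u @ v) ` ({w. p w \<noteq> 0} \<times> {w. q w \<noteq> 0}))"
    using finite_imageI[OF finite_cartesian_product[OF nc_polys_fin[OF a(1)] nc_polys_fin[OF a(2)]]] .
  ultimately show "finite {w. pmul p q w \<noteq> 0}" using finite_subset by blast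
  fix w assume "pmul p q w \<noteq> 0"
  then obtain u v where "w = u @ v" "p u \<noteq> 0" "q v \<noteq> 0" using pmul_nz by blast
  moreover have "set u \<subseteq> G" using a(1) \<open>p u \<noteq> 0\<close> by (rule nc_polys_set)
  moreover have "set v \<subseteq> G" using a(2) \<open>q v \<noteq> 0\<close> by (rule nc_polys_set)
  ultimately show "set w \<subseteq> G" by simp
qed

lemma sum_nc: "(\<And>i. i \<in> S \<Longrightarrow> f i \<in> nc_polys G) \<Longrightarrow> (\<lambda>w. \<Sum>i\<in>S. f i w) \<in> nc_polys G"
proof (induction S rule: infinite_finite_induct)
  case (insert x F)
  have "(\<lambda>w. \<Sum>i\<in>insert x F. f i w) = padd (f x) (\<lambda>w. \<Sum>i\<in>F. f i w)"
    using insert by (simp add: padd_def)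
  then show ?case using insert by (simp add: padd_nc)
qed simp_all

lemma nc_induct[consumes 1, case_names zero step]:
  assumes p: "p \<in> nc_polys G" and z: "Q zp"
    and st: "\<And>p c u. p \<in> nc_polys G \<Longrightarrow> set u \<subseteq> G \<Longrightarrow> Q p \<Longrightarrow> Q (padd p (psmul c (mon u)))"
  shows "Q p"
proof -
  have "\<forall>p. {w. p w \<noteq> 0} = S \<and> p \<in> nc_polys G \<longrightarrow> Q p" if "finite S" for S
    using that
  proof (induction S rule: finite_induct)
    case empty
    { fix p :: "'a ncpoly" assume "{w. p w \<noteq> 0} = {}" then have "p = zp" by auto }
    then show ?case using z by auto
  next
    case (insert u S)
    show ?case
    proof (intro allI impI)
      fix p :: "'a ncpoly" assume h: "{w. p w \<noteq> 0} = insert u S \<and> p \<in> nc_polys G"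
      define p' where "p' = p(u := 0)"
      have s: "{w. p' w \<noteq> 0} = S" using h insert(2) by (auto simp: p'_def)
      have "p' \<in> nc_polys G" using h s insert(1) by (auto simp: nc_polys_def p'_def)
      then have "Q p'" using insert s by auto
      moreover have "set u \<subseteq> G" using h by (auto simp: nc_polys_def)
      moreover have "p = padd p' (psmul (p u) (mon u))"
        by (rule ext) (simp add: p'_def padd_def psmul_def mon_def)
      ultimately show "Q p" using st \<open>p' \<in> nc_polys G\<close> by metis
    qed
  qed
  then show ?thesis using p nc_polys_fin by blast
qed

section \<open>Ideals\<close>

context
  fixes G :: "'g set" and R :: "'g ncpoly set"
begin

abbreviation "II \<equiv> ideal_gen (nc_polys G) R"

lemma id_zero: "zp \<in> II" by (rule ideal_gen.zero)
lemma id_add: "p \<in> II \<Longrightarrow> q \<in> II \<Longrightarrow> padd p q \<in> II" by (rule ideal_gen.add)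

lemma id_smul: "p \<in> II \<Longrightarrow> psmul c p \<in> II"
proof (induction rule: ideal_gen.induct)
  case zero then show ?case by (simp add: psmul_def ideal_gen.zero)
next
  case (gen r a b)
  have "psmul c (pmul (pmul a r) b) = pmul (pmul (psmul c a) r) b"
    by (simp add: pmul_psmul_left)
  then show ?case using gen by (simp add: ideal_gen.gen psmul_nc)
next
  case (add p q)
  have "psmul c (padd p q) = padd (psmul c p) (psmul c q)"
    by (rule ext) (simp add: psmul_def padd_def algebra_simps)
  then show ?case using add by (simp add: ideal_gen.add)
qed

lemma id_psub: "p \<in> II \<Longrightarrow> q \<in> II \<Longrightarrow> psub p q \<in> II"
proof -
  assume a: "p \<in> II" "q \<in> II"
  have "psub p q = padd p (psmul (-1) q)" by (rule ext) (simp add: psub_def padd_def psmul_def)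
  then show ?thesis using a by (simp add: id_add id_smul)
qed

lemma id_lmul: assumes "c \<in> nc_polys G" "p \<in> II" shows "pmul c p \<in> II"
  using assms(2,1) proof (induction rule: ideal_gen.induct)
  case zero then show ?case by (simp add: ideal_gen.zero)
next
  case (gen r a b)
  have "pmul c (pmul (pmul a r) b) = pmul (pmul (pmul c a) r) b"
    by (simp add: pmul_assoc)
  then show ?case using gen by (simp add: ideal_gen.gen pmul_nc)
next
  case (add p q)
  then show ?case by (simp add: pmul_padd_right ideal_gen.add)
qed

lemma id_rmul: assumes "c \<in> nc_polys G" "p \<in> II" shows "pmul p c \<in> II"
  using assms(2,1) proof (induction rule: ideal_gen.induct)
  case zero then show ?case by (simp add: ideal_gen.zero)
next
  case (gen r a b)
  have "pmul (pmul (pmul a r) b) c = pmul (pmul a r) (pmul b c)"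
    by (simp add: pmul_assoc)
  then show ?case using gen by (simp add: ideal_gen.gen pmul_nc)
next
  case (add p q)
  then show ?case by (simp add: pmul_padd_left ideal_gen.add)
qed

lemma id_rel: "r \<in> R \<Longrightarrow> r \<in> II"
  using ideal_gen.gen[of r R pone "nc_polys G" pone] by simp

lemma id_sum: "(\<And>i. i \<in> S \<Longrightarrow> f i \<in> II) \<Longrightarrow> (\<lambda>w. \<Sum>i\<in>S. f i w) \<in> II"
proof (induction S rule: infinite_finite_induct)
  case (insert x F)
  have "(\<lambda>w. \<Sum>i\<in>insert x F. f i w) = padd (f x) (\<lambda>w. \<Sum>i\<in>F. f i w)"
    using insert by (simp add: padd_def)
  then show ?case using insert by (simp add: id_add)
qed (simp_all add: id_zero)

lemma id_sub_nc: assumes "R \<subseteq> nc_polys G" "p \<in> II" shows "p \<in> nc_polys G"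
  using assms(2,1) by (induction rule: ideal_gen.induct) (auto simp: pmul_nc padd_nc)

definition cg :: "'g ncpoly \<Rightarrow> 'g ncpoly \<Rightarrow> bool" where
  "cg p q \<longleftrightarrow> psub p q \<in> II"

lemma cg_refl: "cg p p"
proof -
  have "psub p p = zp" by (rule ext) (simp add: psub_def)
  then show ?thesis by (simp add: cg_def id_zero)
qed
lemma cg_eq: "p = q \<Longrightarrow> cg p q" using cg_refl by simp
lemma cg_sym: "cg p q \<Longrightarrow> cg q p"
proof -
  assume "cg p q"
  have "psub q p = psmul (-1) (psub p q)" by (rule ext) (simp add: psub_def psmul_def)
  then show ?thesis using \<open>cg p q\<close> by (simp add: cg_def id_smul)
qed
lemma cg_trans: "cg p q \<Longrightarrow> cg q r \<Longrightarrow> cg p r"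
proof -
  assume a: "cg p q" "cg q r"
  have "psub p r = padd (psub p q) (psub q r)" by (rule ext) (simp add: psub_def padd_def)
  then show ?thesis using a by (simp add: cg_def id_add)
qed
lemma cg_add: "cg p q \<Longrightarrow> cg p' q' \<Longrightarrow> cg (padd p p') (padd q q')"
proof -
  assume a: "cg p q" "cg p' q'"
  have "psub (padd p p') (padd q q') = padd (psub p q) (psub p' q')"
    by (rule ext) (simp add: psub_def padd_def)
  then show ?thesis using a by (simp add: cg_def id_add)
qed
lemma cg_smul: "cg p q \<Longrightarrow> cg (psmul c p) (psmul c q)"
proof -
  assume a: "cg p q"
  have "psub (psmul c p) (psmul c q) = psmul c (psub p q)"
    by (rule ext) (simp add: psub_def psmul_def algebra_simps)
  then show ?thesis using a by (simp add: cg_def id_smul)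
qed
lemma cg_lmul: "c \<in> nc_polys G \<Longrightarrow> cg p q \<Longrightarrow> cg (pmul c p) (pmul c q)"
  by (simp add: cg_def id_lmul flip: pmul_psub_right)
lemma cg_rmul: "c \<in> nc_polys G \<Longrightarrow> cg p q \<Longrightarrow> cg (pmul p c) (pmul q c)"
  by (simp add: cg_def id_rmul flip: pmul_psub_left)
lemma cg_mul: "cg p q \<Longrightarrow> cg p' q' \<Longrightarrow> p' \<in> nc_polys G \<Longrightarrow> q \<in> nc_polys G \<Longrightarrow>
   cg (pmul p p') (pmul q q')"
proof -
  assume a: "cg p q" "cg p' q'" "p' \<in> nc_polys G" "q \<in> nc_polys G"
  have "cg (pmul p p') (pmul q p')" using a by (rule_tac cg_rmul)
  moreover have "cg (pmul q p') (pmul q q')" using a by (rule_tac cg_lmul)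
  ultimately show ?thesis by (rule cg_trans)
qed
lemma cg_sum: "(\<And>i. i \<in> S \<Longrightarrow> cg (f i) (g i)) \<Longrightarrow> cg (\<lambda>w. \<Sum>i\<in>S. f i w) (\<lambda>w. \<Sum>i\<in>S. g i w)"
proof -
  assume a: "\<And>i. i \<in> S \<Longrightarrow> cg (f i) (g i)"
  have "psub (\<lambda>w. \<Sum>i\<in>S. f i w) (\<lambda>w. \<Sum>i\<in>S. g i w) = (\<lambda>w. \<Sum>i\<in>S. psub (f i) (g i) w)"
    by (rule ext) (simp add: psub_def sum_subtractf)
  then show ?thesis using a by (simp add: cg_def id_sum)
qed
lemma cg_zero_iff: "cg p zp \<longleftrightarrow> p \<in> II"
proof -
  have "psub p zp = p" by (rule ext) (simp add: psub_def)
  then show ?thesis by (simp add: cg_def)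
qed

end




fun wprod :: "('g \<Rightarrow> 'h ncpoly) \<Rightarrow> 'g list \<Rightarrow> 'h ncpoly" where
  "wprod g [] = pone"
| "wprod g (a#u) = pmul (g a) (wprod g u)"

definition ev :: "('g \<Rightarrow> 'h ncpoly) \<Rightarrow> 'g ncpoly \<Rightarrow> 'h ncpoly" where
  "ev g p = (\<lambda>z. \<Sum>w\<in>{w. p w \<noteq> 0}. p w * wprod g w z)"

abbreviation fs :: "'g ncpoly \<Rightarrow> bool" where "fs p \<equiv> p \<in> nc_polys UNIV"

lemma fs_nc: "p \<in> nc_polys G \<Longrightarrow> fs p"
  by (erule nc_polys_mono_G) simp

lemma ev_superset: assumes "finite S" "{w. p w \<noteq> 0} \<subseteq> S"
  shows "ev g p = (\<lambda>z. \<Sum>w\<in>S. p w * wprod g w z)"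
  unfolding ev_def
proof (rule ext)
  fix z show "(\<Sum>w\<in>{w. p w \<noteq> 0}. p w * wprod g w z) = (\<Sum>w\<in>S. p w * wprod g w z)"
    by (rule sum.mono_neutral_left[OF assms(1,2)]) auto
qed

lemma ev_zero[simp]: "ev g zp = zp" by (simp add: ev_def)

lemma ev_padd: assumes "fs p" "fs q" shows "ev g (padd p q) = padd (ev g p) (ev g q)"
proof -
  let ?S = "{w. p w \<noteq> 0} \<union> {w. q w \<noteq> 0}"
  have f: "finite ?S" using nc_polys_fin[OF assms(1)] nc_polys_fin[OF assms(2)] by simp
  have "ev g (padd p q) = (\<lambda>z. \<Sum>w\<in>?S. padd p q w * wprod g w z)"
    by (rule ev_superset[OF f]) (auto simp: padd_def)
  moreover have "ev g p = (\<lambda>z. \<Sum>w\<in>?S. p w * wprod g w z)" by (rule ev_superset[OF f]) auto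
  moreover have "ev g q = (\<lambda>z. \<Sum>w\<in>?S. q w * wprod g w z)" by (rule ev_superset[OF f]) auto
  ultimately show ?thesis by (simp add: padd_def sum.distrib algebra_simps)
qed

lemma ev_psmul: assumes "fs p" shows "ev g (psmul c p) = psmul c (ev g p)"
proof -
  let ?S = "{w. p w \<noteq> 0}"
  have f: "finite ?S" using nc_polys_fin[OF assms(1)] by simp
  have "ev g (psmul c p) = (\<lambda>z. \<Sum>w\<in>?S. psmul c p w * wprod g w z)"
    by (rule ev_superset[OF f]) (auto simp: psmul_def)
  then show ?thesis by (simp add: psmul_def sum_distrib_left algebra_simps ev_def)
qed

lemma ev_psub: assumes "fs p" "fs q" shows "ev g (psub p q) = psub (ev g p) (ev g q)"
proof -
  have "psub p q = padd p (psmul (-1) q)" by (rule ext) (simp add: psub_def padd_def psmul_def)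
  moreover have "psub (ev g p) (ev g q) = padd (ev g p) (psmul (-1) (ev g q))"
    by (rule ext) (simp add: psub_def padd_def psmul_def)
  ultimately show ?thesis using assms by (simp add: ev_padd ev_psmul psmul_nc)
qed

lemma ev_mon: "ev g (mon u) = wprod g u"
proof -
  have "ev g (mon u) = (\<lambda>z. \<Sum>w\<in>{u}. mon u w * wprod g w z)"
    by (rule ev_superset) (auto simp: mon_def)
  then show ?thesis by (simp add: mon_def)
qed

lemma ev_pone: "ev g pone = pone"
  using ev_mon[of g "[]"] by (simp add: mono_Nil)

lemma pgen_mon: "pgen a = mon [a]"
  by (rule ext) (simp add: pgen_def mon_def)

lemma ev_pgen: "ev g (pgen a) = g a"
  by (simp add: pgen_mon ev_mon)

lemma wprod_append: "wprod g (u @ v) = pmul (wprod g u) (wprod g v)"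
  by (induction u) (simp_all add: pmul_assoc)

lemma ev_sum: "(\<And>i. i \<in> S \<Longrightarrow> fs (f i)) \<Longrightarrow> ev g (\<lambda>w. \<Sum>i\<in>S. f i w) = (\<lambda>z. \<Sum>i\<in>S. ev g (f i) z)"
proof (induction S rule: infinite_finite_induct)
  case (insert x F)
  have "(\<lambda>w. \<Sum>i\<in>insert x F. f i w) = padd (f x) (\<lambda>w. \<Sum>i\<in>F. f i w)"
    using insert by (simp add: padd_def)
  moreover have "fs (\<lambda>w. \<Sum>i\<in>F. f i w)" using insert by (simp add: sum_nc)
  ultimately have "ev g (\<lambda>w. \<Sum>i\<in>insert x F. f i w) = padd (ev g (f x)) (ev g (\<lambda>w. \<Sum>i\<in>F. f i w))"
    using insert by (simp add: ev_padd)
  then show ?case using insert by (simp add: padd_def)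
qed simp_all

lemma ev_pmul_mon: assumes "fs q" shows "ev g (pmul (mon u) q) = pmul (wprod g u) (ev g q)"
  using assms
proof (induction q rule: nc_induct)
  case zero then show ?case by simp
next
  case (step q c v)
  have "pmul (mon u) (padd q (psmul c (mon v))) = padd (pmul (mon u) q) (psmul c (mon (u @ v)))"
    by (simp add: pmul_padd_right pmul_psmul_right pmul_mono)
  moreover have "fs (pmul (mon u) q)" using step by (simp add: pmul_nc mono_nc)
  ultimately show ?case using step
    by (simp add: ev_padd ev_psmul psmul_nc mono_nc ev_mon wprod_append pmul_padd_right pmul_psmul_right)
qed

lemma ev_pmul: assumes "fs p" "fs q" shows "ev g (pmul p q) = pmul (ev g p) (ev g q)"
  using assms(1)
proof (induction p rule: nc_induct)
  case zero then show ?case by simp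
next
  case (step p c u)
  have "pmul (padd p (psmul c (mon u))) q = padd (pmul p q) (psmul c (pmul (mon u) q))"
    by (simp add: pmul_padd_left pmul_psmul_left)
  moreover have "fs (pmul p q)" "fs (pmul (mon u) q)" using step assms by (simp_all add: pmul_nc mono_nc)
  ultimately show ?case using step assms
    by (simp add: ev_padd ev_psmul psmul_nc mono_nc ev_mon ev_pmul_mon pmul_padd_left pmul_psmul_left)
qed

lemma wprod_nc: "set u \<subseteq> G \<Longrightarrow> (\<And>a. a \<in> G \<Longrightarrow> g a \<in> nc_polys G') \<Longrightarrow> wprod g u \<in> nc_polys G'"
  by (induction u) (simp_all add: pmul_nc)

lemma ev_nc: assumes "p \<in> nc_polys G" "\<And>a. a \<in> G \<Longrightarrow> g a \<in> nc_polys G'"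
  shows "ev g p \<in> nc_polys G'"
proof -
  have "ev g p = (\<lambda>z. \<Sum>w\<in>{w. p w \<noteq> 0}. psmul (p w) (wprod g w) z)"
    by (simp add: ev_def psmul_def)
  moreover have "psmul (p w) (wprod g w) \<in> nc_polys G'" if "w \<in> {w. p w \<noteq> 0}" for w
    using that nc_polys_set[OF assms(1)] assms(2) by (intro psmul_nc wprod_nc) auto
  ultimately show ?thesis using sum_nc[of "{w. p w \<noteq> 0}" "\<lambda>w. psmul (p w) (wprod g w)" G'] by simp
qed

lemma ev_cong: assumes "p \<in> nc_polys G" "\<And>a. a \<in> G \<Longrightarrow> g a = g' a" shows "ev g p = ev g' p"
proof -
  have "wprod g w = wprod g' w" if "set w \<subseteq> G" for w
    using that assms(2) by (induction w) auto
  then show ?thesis unfolding ev_def using nc_polys_set[OF assms(1)]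
    by (intro ext sum.cong) auto
qed

lemma wprod_pgen: "wprod pgen u = mon u"
  by (induction u) (simp_all add: mono_Nil mono_Cons)

lemma ev_id: assumes "fs p" shows "ev pgen p = p"
proof (rule ext)
  fix z
  have "ev pgen p z = (\<Sum>w\<in>{w. p w \<noteq> 0}. p w * mon w z)" by (simp add: ev_def wprod_pgen)
  also have "\<dots> = (\<Sum>w\<in>{w. p w \<noteq> 0}. if w = z then p z else 0)"
    by (intro sum.cong) (auto simp: mon_def)
  also have "\<dots> = p z" using nc_polys_fin[OF assms] by (simp add: sum.delta')
  finally show "ev pgen p z = p z" .
qed

lemma ev_wprod: assumes "\<And>a. fs (g a)" shows "ev h (wprod g u) = wprod (\<lambda>a. ev h (g a)) u"
proof (induction u)
  case Nil then show ?case by (simp add: ev_pone)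
next
  case (Cons a u)
  have "fs (wprod g u)" using assms by (intro wprod_nc) auto
  then show ?case using Cons assms by (simp add: ev_pmul)
qed

lemma ev_comp: assumes "fs p" "\<And>a. fs (g a)" shows "ev h (ev g p) = ev (\<lambda>a. ev h (g a)) p"
  using assms(1)
proof (induction p rule: nc_induct)
  case zero then show ?case by simp
next
  case (step p c u)
  have f1: "fs (ev g p)" using step assms by (simp add: ev_nc)
  have f2: "fs (wprod g u)" using assms by (intro wprod_nc) auto
  show ?case using step f1 f2
    by (simp add: ev_padd ev_psmul psmul_nc mono_nc ev_mon ev_wprod[OF assms(2)])
qed

lemma ev_ideal:
  assumes RG: "R \<subseteq> nc_polys G" and gG: "\<And>a. a \<in> G \<Longrightarrow> g a \<in> nc_polys G'"
    and rel: "\<And>r. r \<in> R \<Longrightarrow> ev g r \<in> ideal_gen (nc_polys G') R'"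
    and p: "p \<in> ideal_gen (nc_polys G) R"
  shows "ev g p \<in> ideal_gen (nc_polys G') R'"
  using p
proof (induction rule: ideal_gen.induct)
  case zero then show ?case by (simp add: ideal_gen.zero)
next
  case (gen r a b)
  have fr: "fs r" using gen RG fs_nc by blast
  have "ev g (pmul (pmul a r) b) = pmul (pmul (ev g a) (ev g r)) (ev g b)"
    using gen fr by (simp add: ev_pmul pmul_nc fs_nc)
  moreover have "ev g a \<in> nc_polys G'" "ev g b \<in> nc_polys G'" using gen gG by (simp_all add: ev_nc)
  ultimately show ?case using rel[OF gen(1)] by (simp add: id_lmul id_rmul)
next
  case (add p q)
  have "fs p" "fs q" using add id_sub_nc[OF RG] fs_nc by blast+
  then show ?case using add by (simp add: ev_padd ideal_gen.add)
qed




lemma lcr1: "v \<in> V \<Longrightarrow> psub (\<lambda>u. \<Sum>x\<in>W. pgen (v, x) u) pone \<in> lc_rels V E W F"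
  unfolding lc_rels_def by blast
lemma lcr2: "v \<in> V \<Longrightarrow> x \<in> W \<Longrightarrow> psub (pmul (pgen (v, x)) (pgen (v, x))) (pgen (v, x)) \<in> lc_rels V E W F"
  unfolding lc_rels_def by blast
lemma lcr3: "v \<in> V \<Longrightarrow> x \<in> W \<Longrightarrow> y \<in> W \<Longrightarrow> x \<noteq> y \<Longrightarrow> pmul (pgen (v, x)) (pgen (v, y)) \<in> lc_rels V E W F"
  unfolding lc_rels_def by blast
lemma lcr4: "v \<in> V \<Longrightarrow> w \<in> V \<Longrightarrow> x \<in> W \<Longrightarrow> y \<in> W \<Longrightarrow> E v w \<Longrightarrow> \<not> F x y \<Longrightarrow>
    pmul (pgen (v, x)) (pgen (w, y)) \<in> lc_rels V E W F"
  unfolding lc_rels_def by blast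
lemma lcr5: "v \<in> V \<Longrightarrow> w \<in> V \<Longrightarrow> x \<in> W \<Longrightarrow> y \<in> W \<Longrightarrow> E v w \<Longrightarrow>
    psub (pmul (pgen (v, x)) (pgen (w, y))) (pmul (pgen (w, y)) (pgen (v, x))) \<in> lc_rels V E W F"
  unfolding lc_rels_def by blast

lemma lc_rels_cases:
  assumes "r \<in> lc_rels V E W F"
  obtains (r1) v where "v \<in> V" "r = psub (\<lambda>u. \<Sum>x\<in>W. pgen (v, x) u) pone"
  | (r2) v x where "v \<in> V" "x \<in> W" "r = psub (pmul (pgen (v, x)) (pgen (v, x))) (pgen (v, x))"
  | (r3) v x y where "v \<in> V" "x \<in> W" "y \<in> W" "x \<noteq> y" "r = pmul (pgen (v, x)) (pgen (v, y))"
  | (r4) v w x y where "v \<in> V" "w \<in> V" "x \<in> W" "y \<in> W" "E v w" "\<not> F x y"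
       "r = pmul (pgen (v, x)) (pgen (w, y))"
  | (r5) v w x y where "v \<in> V" "w \<in> V" "x \<in> W" "y \<in> W" "E v w"
       "r = psub (pmul (pgen (v, x)) (pgen (w, y))) (pmul (pgen (w, y)) (pgen (v, x)))"
  using assms unfolding lc_rels_def by blast

lemma lc_rels_nc: "lc_rels V E W F \<subseteq> nc_polys (V \<times> W)"
proof
  fix r assume "r \<in> lc_rels V E W F"
  then show "r \<in> nc_polys (V \<times> W)"
  proof (cases rule: lc_rels_cases)
    case (r1 v) then show ?thesis by (simp add: psub_nc sum_nc pgen_nc)
  next
    case (r2 v x) then show ?thesis by (simp add: psub_nc pmul_nc pgen_nc)
  next
    case (r3 v x y) then show ?thesis by (simp add: pmul_nc pgen_nc)
  next
    case (r4 v w x y) then show ?thesis by (simp add: pmul_nc pgen_nc)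
  next
    case (r5 v w x y) then show ?thesis by (simp add: psub_nc pmul_nc pgen_nc)
  qed
qed

lemma qsub_pres: "qsub (presented G R) a b = psub a b"
  by (rule ext) (simp add: qsub_def presented_def padd_def psmul_def psub_def)

lemma dsum_qsub: "(qsub (dsum T A) f g \<in> idl (dsum T A)) \<longleftrightarrow> (\<forall>y\<in>T. qsub (A y) (f y) (g y) \<in> idl (A y))"
  by (simp add: qsub_def dsum_def)

lemma fs_pgen[simp]: "fs (pgen a)" by (simp add: pgen_nc)
lemma fs_pone[simp]: "fs pone" by simp

locale cfg =
  fixes V :: "'a set" and E :: "'a \<Rightarrow> 'a \<Rightarrow> bool"
    and W :: "'b set" and F :: "'b \<Rightarrow> 'b \<Rightarrow> bool"
    and T :: "'b set" and N' :: "'b \<Rightarrow> 'b set" and F' :: "'b \<Rightarrow> 'b \<Rightarrow> 'b \<Rightarrow> bool"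
    and \<tau> :: "'b \<Rightarrow> 'b \<Rightarrow> 'b"
  assumes gV: "graph V E" and Vne: "V \<noteq> {}" and gW: "graph W F"
    and T_sub: "T \<subseteq> W" and T_ni: "non_isolated W F \<subseteq> T"
    and tbij: "\<And>y. y \<in> T \<Longrightarrow> bij_betw (\<tau> y) (nbhd_V W F y) (N' y)"
    and tadj: "\<And>y x1 x2. y \<in> T \<Longrightarrow> x1 \<in> nbhd_V W F y \<Longrightarrow> x2 \<in> nbhd_V W F y \<Longrightarrow>
        F x1 x2 \<longleftrightarrow> F' y (\<tau> y x1) (\<tau> y x2)"
begin

abbreviation "Nb \<equiv> nbhd_V W F"
abbreviation "GA \<equiv> susp_V V \<times> W"
abbreviation "RA \<equiv> lc_rels (susp_V V) (susp_E V E) W F"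
abbreviation "GB y \<equiv> V \<times> N' y"
abbreviation "RB y \<equiv> lc_rels V E (N' y) (F' y)"
abbreviation "IA \<equiv> ideal_gen (nc_polys GA) RA"
abbreviation "IB y \<equiv> ideal_gen (nc_polys (GB y)) (RB y)"
abbreviation "cgA \<equiv> cg GA RA"

definition ti :: "'b \<Rightarrow> 'b \<Rightarrow> 'b" where "ti y = inv_into (Nb y) (\<tau> y)"

definition g :: "'b \<Rightarrow> 'a option \<times> 'b \<Rightarrow> ('a \<times> 'b) ncpoly" where
  "g y a = (case a of (None, x) \<Rightarrow> if x = y then pone else zp
                   | (Some v, x) \<Rightarrow> if x \<in> Nb y then pgen (v, \<tau> y x) else zp)"

definition h :: "'b \<Rightarrow> 'a \<times> 'b \<Rightarrow> ('a option \<times> 'b) ncpoly" where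
  "h y a = pgen (Some (fst a), ti y (snd a))"

definition P :: "'b \<Rightarrow> ('a option \<times> 'b) ncpoly" where "P y = pgen (None, y)"

definition \<psi> where "\<psi> y = ev (g y)"
definition \<theta> where "\<theta> y = ev (h y)"

definition \<phi> :: "('a option \<times> 'b) ncpoly \<Rightarrow> 'b \<Rightarrow> ('a \<times> 'b) ncpoly" where
  "\<phi> a = (\<lambda>y. if y \<in> T then \<psi> y a else undefined)"

definition \<chi> :: "('b \<Rightarrow> ('a \<times> 'b) ncpoly) \<Rightarrow> ('a option \<times> 'b) ncpoly" where
  "\<chi> f = (\<lambda>w. \<Sum>y\<in>T. pmul (P y) (\<theta> y (f y)) w)"

lemma finW: "finite W" using gW by (simp add: graph_def)
lemma finT: "finite T" using finW T_sub finite_subset by blast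
lemma Fsym: "F a b \<Longrightarrow> F b a" using gW by (simp add: graph_def)
lemma FW: "F a b \<Longrightarrow> a \<in> W \<and> b \<in> W" using gW by (simp add: graph_def)
lemma EV: "E a b \<Longrightarrow> a \<in> V \<and> b \<in> V" using gV by (simp add: graph_def)
lemma Nb_sub: "Nb y \<subseteq> W" by (auto simp: nbhd_V_def)
lemma Nb_iff: "x \<in> Nb y \<longleftrightarrow> x \<in> W \<and> F y x" by (simp add: nbhd_V_def)

lemma susp_V_iff: "Some v \<in> susp_V V \<longleftrightarrow> v \<in> V" "None \<in> susp_V V" by (auto simp: susp_V_def)
lemma susp_E_simps: "susp_E V E None (Some w) \<longleftrightarrow> w \<in> V" "susp_E V E (Some w) None \<longleftrightarrow> w \<in> V"
  "susp_E V E (Some v) (Some w) \<longleftrightarrow> E v w" "\<not> susp_E V E None None"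
  by (simp_all add: susp_E_def)

lemma tau_in: "y \<in> T \<Longrightarrow> x \<in> Nb y \<Longrightarrow> \<tau> y x \<in> N' y"
  using tbij by (meson bij_betwE)
lemma tau_inj: "y \<in> T \<Longrightarrow> x1 \<in> Nb y \<Longrightarrow> x2 \<in> Nb y \<Longrightarrow> \<tau> y x1 = \<tau> y x2 \<Longrightarrow> x1 = x2"
  using tbij by (meson bij_betw_def inj_onD)
lemma ti_bij: "y \<in> T \<Longrightarrow> bij_betw (ti y) (N' y) (Nb y)"
  unfolding ti_def using tbij by (simp add: bij_betw_inv_into)
lemma ti_in: "y \<in> T \<Longrightarrow> x \<in> N' y \<Longrightarrow> ti y x \<in> Nb y"
  using ti_bij by (meson bij_betwE)
lemma tau_ti: assumes "y \<in> T" "x \<in> N' y" shows "\<tau> y (ti y x) = x"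
proof -
  have "x \<in> \<tau> y ` Nb y" using tbij[OF assms(1)] assms(2) by (simp add: bij_betw_def)
  then show ?thesis unfolding ti_def by (rule f_inv_into_f)
qed
lemma ti_tau: "y \<in> T \<Longrightarrow> x \<in> Nb y \<Longrightarrow> ti y (\<tau> y x) = x"
  unfolding ti_def using tbij by (meson bij_betw_def inv_into_f_f)

lemma g_None: "g y (None, x) = (if x = y then pone else zp)" by (simp add: g_def)
lemma g_Some: "g y (Some v, x) = (if x \<in> Nb y then pgen (v, \<tau> y x) else zp)" by (simp add: g_def)

lemma fs_g: "fs (g y a)" by (cases a; cases "fst a") (auto simp: g_def)
lemma fs_h: "fs (h y a)" by (simp add: h_def)

lemma g_nc: "y \<in> T \<Longrightarrow> a \<in> GA \<Longrightarrow> g y a \<in> nc_polys (GB y)"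
  by (cases a; cases "fst a") (auto simp: g_def susp_V_def intro!: pgen_nc tau_in)

lemma h_nc: "y \<in> T \<Longrightarrow> a \<in> GB y \<Longrightarrow> h y a \<in> nc_polys GA"
  using Nb_sub by (cases a) (auto simp: h_def susp_V_def intro!: pgen_nc dest: ti_in)

lemma psi_nc: "y \<in> T \<Longrightarrow> p \<in> nc_polys GA \<Longrightarrow> \<psi> y p \<in> nc_polys (GB y)"
  unfolding \<psi>_def by (rule ev_nc) (auto intro: g_nc)

lemma theta_nc: "y \<in> T \<Longrightarrow> p \<in> nc_polys (GB y) \<Longrightarrow> \<theta> y p \<in> nc_polys GA"
  unfolding \<theta>_def by (rule ev_nc) (auto intro: h_nc)

lemma P_nc: "y \<in> W \<Longrightarrow> P y \<in> nc_polys GA"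
  by (simp add: P_def pgen_nc susp_V_def)

end




lemma psub_self[simp]: "psub p p = zp" by (rule ext) (simp add: psub_def)

context cfg begin

lemma g_cases: "g y a = zp \<or> g y a = pone \<or> (\<exists>v x. a = (Some v, x) \<and> x \<in> Nb y \<and> g y a = pgen (v, \<tau> y x))"
  by (cases a; cases "fst a") (auto simp: g_def)

lemma psi_pgen: "\<psi> y (pgen a) = g y a" by (simp add: \<psi>_def ev_pgen)

lemma psi_sumW: assumes y: "y \<in> T" and v: "v \<in> V"
  shows "(\<lambda>z. \<Sum>x\<in>W. g y (Some v, x) z) = (\<lambda>z. \<Sum>x'\<in>N' y. pgen (v, x') z)"
proof (rule ext)
  fix z
  have "(\<Sum>x\<in>W. g y (Some v, x) z) = (\<Sum>x\<in>Nb y. g y (Some v, x) z)"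
    by (rule sum.mono_neutral_right[OF finW Nb_sub]) (auto simp: g_Some)
  also have "\<dots> = (\<Sum>x\<in>Nb y. pgen (v, \<tau> y x) z)" by (rule sum.cong) (auto simp: g_Some)
  also have "\<dots> = (\<Sum>x'\<in>N' y. pgen (v, x') z)"
    by (rule sum.reindex_bij_betw[OF tbij[OF y], of "\<lambda>x'. pgen (v, x') z"])
  finally show "(\<Sum>x\<in>W. g y (Some v, x) z) = (\<Sum>x'\<in>N' y. pgen (v, x') z)" .
qed

lemma psi_rel: assumes y: "y \<in> T" and r: "r \<in> RA" shows "\<psi> y r \<in> IB y"
  using r
proof (cases rule: lc_rels_cases)
  case (r1 a)
  have "\<psi> y r = psub (\<lambda>z. \<Sum>x\<in>W. g y (a, x) z) pone"
    using r1 by (simp add: \<psi>_def ev_psub ev_sum sum_nc ev_pgen ev_pone)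
  show ?thesis
  proof (cases a)
    case None
    have "(\<lambda>z. \<Sum>x\<in>W. g y (a, x) z) = pone"
    proof (rule ext)
      fix z
      have "(\<Sum>x\<in>W. g y (a, x) z) = (\<Sum>x\<in>W. if x = y then pone z else 0)"
        using None by (intro sum.cong) (auto simp: g_None)
      also have "\<dots> = pone z" using y T_sub finW by auto
      finally show "(\<Sum>x\<in>W. g y (a, x) z) = pone z" .
    qed
    then show ?thesis using \<open>\<psi> y r = _\<close> by (simp add: id_zero)
  next
    case (Some v)
    then have "v \<in> V" using r1 by (simp add: susp_V_iff)
    then have "\<psi> y r = psub (\<lambda>z. \<Sum>x'\<in>N' y. pgen (v, x') z) pone"
      using \<open>\<psi> y r = _\<close> Some psi_sumW[OF y] by simp
    then show ?thesis using \<open>v \<in> V\<close> by (simp add: id_rel lcr1)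
  qed
next
  case (r2 a x)
  have e: "\<psi> y r = psub (pmul (g y (a, x)) (g y (a, x))) (g y (a, x))"
    using r2 by (simp add: \<psi>_def ev_psub ev_pmul pmul_nc ev_pgen)
  from g_cases[of y "(a, x)"] show ?thesis
  proof (elim disjE exE conjE)
    assume "g y (a, x) = zp" then show ?thesis using e by (simp add: id_zero)
  next
    assume "g y (a, x) = pone" then show ?thesis using e by (simp add: id_zero)
  next
    fix v x' assume h: "(a, x) = (Some v, x')" "x' \<in> Nb y" "g y (a, x) = pgen (v, \<tau> y x')"
    then have "v \<in> V" using r2 by (simp add: susp_V_iff)
    then show ?thesis using e h by (simp add: id_rel lcr2 tau_in y)
  qed
next
  case (r3 a x x2)
  have e: "\<psi> y r = pmul (g y (a, x)) (g y (a, x2))"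
    using r3 by (simp add: \<psi>_def ev_pmul ev_pgen)
  show ?thesis
  proof (cases a)
    case None
    then show ?thesis using e r3 by (auto simp: g_None id_zero)
  next
    case (Some v)
    then have "v \<in> V" using r3 by (simp add: susp_V_iff)
    show ?thesis
    proof (cases "x \<in> Nb y \<and> x2 \<in> Nb y")
      case True
      then have "\<tau> y x \<noteq> \<tau> y x2" using tau_inj[OF y] r3 by blast
      then show ?thesis using e Some True \<open>v \<in> V\<close> y by (simp add: g_Some id_rel lcr3 tau_in)
    next
      case False
      then show ?thesis using e Some by (auto simp: g_Some id_zero)
    qed
  qed
next
  case (r4 a b x x2)
  have e: "\<psi> y r = pmul (g y (a, x)) (g y (b, x2))"
    using r4 by (simp add: \<psi>_def ev_pmul ev_pgen)
  show ?thesis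
  proof (cases a)
    case None
    show ?thesis
    proof (cases b)
      case None then show ?thesis using \<open>a = None\<close> r4 by (simp add: susp_E_simps)
    next
      case (Some w)
      have "\<not> (x = y \<and> x2 \<in> Nb y)" using r4 by (auto simp: Nb_iff)
      then show ?thesis using e None Some by (auto simp: g_None g_Some id_zero)
    qed
  next
    case (Some v)
    show ?thesis
    proof (cases b)
      case None
      have "\<not> (x \<in> Nb y \<and> x2 = y)" using r4 by (auto simp: Nb_iff dest: Fsym)
      then show ?thesis using e None Some by (auto simp: g_None g_Some id_zero)
    next
      case (Some w)
      have Evw: "E v w" using r4 \<open>a = Some v\<close> Some by (simp add: susp_E_simps)
      show ?thesis
      proof (cases "x \<in> Nb y \<and> x2 \<in> Nb y")
        case True
        then have "\<not> F' y (\<tau> y x) (\<tau> y x2)" using tadj[OF y] r4 by blast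
        then show ?thesis using e Some \<open>a = Some v\<close> True Evw y
          by (simp add: g_Some id_rel lcr4 tau_in EV)
      next
        case False
        then show ?thesis using e Some \<open>a = Some v\<close> by (auto simp: g_Some id_zero)
      qed
    qed
  qed
next
  case (r5 a b x x2)
  have e: "\<psi> y r = psub (pmul (g y (a, x)) (g y (b, x2))) (pmul (g y (b, x2)) (g y (a, x)))"
    using r5 by (simp add: \<psi>_def ev_psub ev_pmul pmul_nc ev_pgen)
  have triv: "?thesis" if "g y (a, x) = zp \<or> g y (a, x) = pone \<or> g y (b, x2) = zp \<or> g y (b, x2) = pone"
    using that e by (auto simp: id_zero)
  from g_cases[of y "(a, x)"] g_cases[of y "(b, x2)"] show ?thesis
  proof (elim disjE exE conjE)
    fix v x' w x2'
    assume h1: "(a, x) = (Some v, x')" "x' \<in> Nb y" "g y (a, x) = pgen (v, \<tau> y x')"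
      and h2: "(b, x2) = (Some w, x2')" "x2' \<in> Nb y" "g y (b, x2) = pgen (w, \<tau> y x2')"
    have Evw: "E v w" using r5 h1 h2 by (simp add: susp_E_simps)
    show ?thesis using e h1 h2 Evw y by (simp add: id_rel lcr5 tau_in EV)
  qed (use triv in blast)+
qed

end



lemma cg_comm_mon:
  assumes Pn: "P \<in> nc_polys G" and G0: "G0 \<subseteq> G"
    and gen: "\<And>a. a \<in> G0 \<Longrightarrow> cg G R (pmul P (pgen a)) (pmul (pgen a) P)"
  shows "set u \<subseteq> G0 \<Longrightarrow> cg G R (pmul P (mon u)) (pmul (mon u) P)"
proof (induction u)
  case Nil then show ?case by (simp add: mono_Nil cg_refl)
next
  case (Cons a u)
  have an: "pgen a \<in> nc_polys G" using Cons G0 by (simp add: pgen_nc subset_iff)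
  have un: "mon u \<in> nc_polys G" using Cons G0 by (intro mono_nc) auto
  have "cg G R (pmul (pmul P (pgen a)) (mon u)) (pmul (pmul (pgen a) P) (mon u))"
    using gen Cons un by (intro cg_rmul) auto
  moreover have "cg G R (pmul (pgen a) (pmul P (mon u))) (pmul (pgen a) (pmul (mon u) P))"
    using Cons an by (intro cg_lmul) auto
  ultimately show ?case by (simp add: mono_Cons pmul_assoc cg_trans)
qed

lemma cg_comm:
  assumes Pn: "P \<in> nc_polys G" and G0: "G0 \<subseteq> G"
    and gen: "\<And>a. a \<in> G0 \<Longrightarrow> cg G R (pmul P (pgen a)) (pmul (pgen a) P)"
    and q: "q \<in> nc_polys G0"
  shows "cg G R (pmul P q) (pmul q P)"
  using q
proof (induction q rule: nc_induct)
  case zero then show ?case by (simp add: cg_refl)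
next
  case (step q c u)
  have "cg G R (pmul P (mon u)) (pmul (mon u) P)" using cg_comm_mon[OF Pn G0 gen] step by blast
  then have "cg G R (padd (pmul P q) (psmul c (pmul P (mon u)))) (padd (pmul q P) (psmul c (pmul (mon u) P)))"
    using step by (intro cg_add cg_smul)
  then show ?case by (simp add: pmul_padd_left pmul_padd_right pmul_psmul_left pmul_psmul_right)
qed

lemma cg_in_ideal: "cg G R p q \<Longrightarrow> q \<in> ideal_gen (nc_polys G) R \<Longrightarrow> p \<in> ideal_gen (nc_polys G) R"
  by (meson cg_trans cg_zero_iff)

context cfg begin

abbreviation "G0 \<equiv> (Some ` V) \<times> W"

lemma G0_sub: "G0 \<subseteq> GA" by (auto simp: susp_V_def)

lemma h_nc0: "y \<in> T \<Longrightarrow> a \<in> GB y \<Longrightarrow> h y a \<in> nc_polys G0"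
  using Nb_sub by (cases a) (auto simp: h_def intro!: pgen_nc dest: ti_in)

lemma theta_nc0: "y \<in> T \<Longrightarrow> p \<in> nc_polys (GB y) \<Longrightarrow> \<theta> y p \<in> nc_polys G0"
  unfolding \<theta>_def by (rule ev_nc) (auto intro: h_nc0)

lemma P_comm_gen: "y \<in> W \<Longrightarrow> a \<in> G0 \<Longrightarrow> cgA (pmul (P y) (pgen a)) (pmul (pgen a) (P y))"
  by (auto simp: cg_def P_def intro!: id_rel lcr5 simp: susp_V_iff susp_E_simps)

lemma P_comm: "y \<in> W \<Longrightarrow> q \<in> nc_polys G0 \<Longrightarrow> cgA (pmul (P y) q) (pmul q (P y))"
  by (rule cg_comm[OF P_nc G0_sub P_comm_gen])

lemma theta_pgen: "\<theta> y (pgen (v, x)) = pgen (Some v, ti y x)"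
  by (simp add: \<theta>_def ev_pgen h_def)

lemma theta_rel: assumes y: "y \<in> T" and r: "r \<in> RB y" shows "pmul (P y) (\<theta> y r) \<in> IA"
  using r
proof (cases rule: lc_rels_cases)
  case (r1 v)
  have yW: "y \<in> W" using y T_sub by blast
  let ?e = "\<lambda>x. pgen (Some v, x)"
  let ?SN = "\<lambda>z. \<Sum>x\<in>Nb y. ?e x z"
  let ?SW = "\<lambda>z. \<Sum>x\<in>W. ?e x z"
  let ?SD = "\<lambda>z. \<Sum>x\<in>W - Nb y. ?e x z"
  have "\<theta> y r = psub (\<lambda>z. \<Sum>x'\<in>N' y. pgen (Some v, ti y x') z) pone"
    using r1 by (simp add: \<theta>_def ev_psub ev_sum sum_nc ev_pgen ev_pone h_def)
  also have "(\<lambda>z. \<Sum>x'\<in>N' y. pgen (Some v, ti y x') z) = ?SN"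
    by (rule ext, rule sum.reindex_bij_betw[OF ti_bij[OF y], of "\<lambda>x. ?e x _"])
  finally have th: "\<theta> y r = psub ?SN pone" .
  have "psub ?SN pone = psub (psub ?SW pone) ?SD"
  proof (rule ext)
    fix z
    have "?SW z = ?SD z + ?SN z" by (rule sum.subset_diff[OF Nb_sub finW])
    then show "psub ?SN pone z = psub (psub ?SW pone) ?SD z" by (simp add: psub_def)
  qed
  then have "pmul (P y) (\<theta> y r) = psub (pmul (P y) (psub ?SW pone)) (pmul (P y) ?SD)"
    using th by (simp add: pmul_psub_right)
  moreover have "pmul (P y) (psub ?SW pone) \<in> IA"
    using r1 yW by (intro id_lmul P_nc id_rel lcr1) (auto simp: susp_V_iff)
  moreover have "pmul (P y) ?SD \<in> IA"
  proof -
    have "pmul (P y) (?e x) \<in> IA" if "x \<in> W - Nb y" for x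
      using that r1 yW unfolding P_def
      by (intro id_rel lcr4) (auto simp: susp_V_iff susp_E_simps Nb_iff)
    then show ?thesis unfolding pmul_sum_right by (rule id_sum)
  qed
  ultimately show ?thesis by (simp add: id_psub)
next
  case (r2 v x)
  then show ?thesis using y T_sub ti_in[OF y] Nb_sub
    by (simp add: \<theta>_def ev_psub ev_pmul pmul_nc ev_pgen h_def)
       (intro id_lmul P_nc id_rel lcr2, auto simp: susp_V_iff)
next
  case (r3 v x1 x2)
  have "ti y x1 \<noteq> ti y x2" using r3 tau_ti[OF y] by metis
  then show ?thesis using r3 y T_sub ti_in[OF y] Nb_sub
    by (simp add: \<theta>_def ev_pmul ev_pgen h_def)
       (intro id_lmul P_nc id_rel lcr3, auto simp: susp_V_iff)
next
  case (r4 v w x1 x2)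
  have i1: "ti y x1 \<in> Nb y" "ti y x2 \<in> Nb y" using r4 ti_in[OF y] by auto
  have "\<not> F (ti y x1) (ti y x2)" using tadj[OF y i1] r4 tau_ti[OF y] by simp
  then show ?thesis using r4 y T_sub i1 Nb_sub
    by (simp add: \<theta>_def ev_pmul ev_pgen h_def)
       (intro id_lmul P_nc id_rel lcr4, auto simp: susp_V_iff susp_E_simps)
next
  case (r5 v w x1 x2)
  have i1: "ti y x1 \<in> Nb y" "ti y x2 \<in> Nb y" using r5 ti_in[OF y] by auto
  then show ?thesis using r5 y T_sub Nb_sub
    by (simp add: \<theta>_def ev_psub ev_pmul pmul_nc ev_pgen h_def)
       (intro id_lmul P_nc id_rel lcr5, auto simp: susp_V_iff susp_E_simps)
qed

lemma RB_nc: "RB y \<subseteq> nc_polys (GB y)" by (rule lc_rels_nc)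

lemma chi_ideal_y: assumes y: "y \<in> T" and q: "q \<in> IB y" shows "pmul (P y) (\<theta> y q) \<in> IA"
  using q
proof (induction rule: ideal_gen.induct)
  case zero then show ?case by (simp add: \<theta>_def id_zero)
next
  case (gen r a b)
  have yW: "y \<in> W" using y T_sub by blast
  have rn: "r \<in> nc_polys (GB y)" using gen RB_nc by blast
  have fs: "fs a" "fs b" "fs r" using gen rn by (simp_all add: fs_nc)
  have e: "\<theta> y (pmul (pmul a r) b) = pmul (pmul (\<theta> y a) (\<theta> y r)) (\<theta> y b)"
    using fs by (simp add: \<theta>_def ev_pmul pmul_nc)
  have an: "\<theta> y a \<in> nc_polys GA" "\<theta> y b \<in> nc_polys GA" "\<theta> y r \<in> nc_polys GA"
    using gen rn y by (simp_all add: theta_nc)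
  have c1: "cgA (pmul (P y) (\<theta> y a)) (pmul (\<theta> y a) (P y))"
    using P_comm[OF yW theta_nc0[OF y]] gen by simp
  have "cgA (pmul (pmul (P y) (\<theta> y a)) (pmul (\<theta> y r) (\<theta> y b)))
            (pmul (pmul (\<theta> y a) (P y)) (pmul (\<theta> y r) (\<theta> y b)))"
    using c1 an by (intro cg_rmul pmul_nc)
  moreover have "pmul (pmul (\<theta> y a) (P y)) (pmul (\<theta> y r) (\<theta> y b)) \<in> IA"
  proof -
    have "pmul (pmul (\<theta> y a) (pmul (P y) (\<theta> y r))) (\<theta> y b) \<in> IA"
      by (rule id_rmul[OF an(2)], rule id_lmul[OF an(1)], rule theta_rel[OF y gen(1)])
    then show ?thesis by (simp add: pmul_assoc)
  qed
  ultimately show ?case using e by (simp add: pmul_assoc cg_in_ideal)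
next
  case (add p q)
  have "fs p" "fs q" using add id_sub_nc[OF RB_nc] fs_nc by blast+
  then show ?case using add by (simp add: \<theta>_def ev_padd pmul_padd_right id_add)
qed

lemma chi_ideal: "(\<And>y. y \<in> T \<Longrightarrow> f y \<in> IB y) \<Longrightarrow> \<chi> f \<in> IA"
  unfolding \<chi>_def by (intro id_sum chi_ideal_y)

end



lemma cg_corner_word:
  assumes Pn: "P \<in> nc_polys G" and kn: "\<And>a. a \<in> G \<Longrightarrow> k a \<in> nc_polys G"
    and i: "\<And>a. a \<in> G \<Longrightarrow> cg G R (pmul P (k a)) (pmul P (pgen a))"
    and ii: "\<And>a. a \<in> G \<Longrightarrow> cg G R (pmul P (k a)) (pmul (k a) P)"
  shows "set u \<subseteq> G \<Longrightarrow> cg G R (pmul P (wprod k u)) (pmul P (mon u))"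
proof (induction u)
  case Nil then show ?case by (simp add: mono_Nil cg_refl)
next
  case (Cons a u)
  have aG: "a \<in> G" and uG: "set u \<subseteq> G" using Cons by auto
  have Wn: "wprod k u \<in> nc_polys G" using uG kn by (simp add: wprod_nc)
  have Mn: "mon u \<in> nc_polys G" using uG by (simp add: mono_nc)
  have c1: "cg G R (pmul (pmul P (k a)) (wprod k u)) (pmul (pmul (k a) P) (wprod k u))"
    using ii[OF aG] Wn by (intro cg_rmul)
  have c2: "cg G R (pmul (k a) (pmul P (wprod k u))) (pmul (k a) (pmul P (mon u)))"
    by (rule cg_lmul[OF kn[OF aG] Cons(1)[OF uG]])
  have c3: "cg G R (pmul (pmul (k a) P) (mon u)) (pmul (pmul P (k a)) (mon u))"
    using cg_sym[OF ii[OF aG]] Mn by (intro cg_rmul)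
  have c4: "cg G R (pmul (pmul P (k a)) (mon u)) (pmul (pmul P (pgen a)) (mon u))"
    using i[OF aG] Mn by (intro cg_rmul)
  have "cg G R (pmul P (wprod k (a # u))) (pmul (pmul (k a) P) (wprod k u))"
    using c1 by (simp add: pmul_assoc)
  also have "pmul (pmul (k a) P) (wprod k u) = pmul (k a) (pmul P (wprod k u))" by (simp add: pmul_assoc)
  finally have d1: "cg G R (pmul P (wprod k (a # u))) (pmul (k a) (pmul P (mon u)))"
    using c2 cg_trans by blast
  have "pmul (k a) (pmul P (mon u)) = pmul (pmul (k a) P) (mon u)" by (simp add: pmul_assoc)
  then have "cg G R (pmul P (wprod k (a # u))) (pmul (pmul P (pgen a)) (mon u))"
    using d1 c3 c4 cg_trans by metis
  then show ?case by (simp add: mono_Cons pmul_assoc)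
qed

lemma cg_corner:
  assumes Pn: "P \<in> nc_polys G" and kn: "\<And>a. a \<in> G \<Longrightarrow> k a \<in> nc_polys G"
    and i: "\<And>a. a \<in> G \<Longrightarrow> cg G R (pmul P (k a)) (pmul P (pgen a))"
    and ii: "\<And>a. a \<in> G \<Longrightarrow> cg G R (pmul P (k a)) (pmul (k a) P)"
    and d: "d \<in> nc_polys G"
  shows "cg G R (pmul P (ev k d)) (pmul P d)"
  using d
proof (induction d rule: nc_induct)
  case zero then show ?case by (simp add: cg_refl)
next
  case (step d c u)
  have f: "fs d" "fs (mon u)" using step by (simp_all add: fs_nc mono_nc)
  have "cg G R (pmul P (wprod k u)) (pmul P (mon u))" using cg_corner_word[OF Pn kn i ii] step by blast
  then have "cg G R (padd (pmul P (ev k d)) (psmul c (pmul P (wprod k u))))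
                    (padd (pmul P d) (psmul c (pmul P (mon u))))"
    using step by (intro cg_add cg_smul)
  then show ?case using f
    by (simp add: ev_padd ev_psmul psmul_nc ev_mon pmul_padd_right pmul_psmul_right)
qed

lemma idl_pres: "idl (presented G R) = ideal_gen (nc_polys G) R" by (simp add: presented_def)

context cfg begin

lemma P_ideal_iso: assumes yW: "y \<in> W" and yn: "y \<notin> non_isolated W F" shows "P y \<in> IA"
proof -
  obtain v0 where v0: "v0 \<in> V" using Vne by blast
  have nF: "\<not> F y x" for x using yW yn by (auto simp: non_isolated_def)
  let ?S = "\<lambda>z. \<Sum>x\<in>W. pgen (Some v0, x) z"
  have "cgA ?S pone" unfolding cg_def using v0 by (intro id_rel lcr1) (simp add: susp_V_iff)
  then have c: "cgA (pmul (P y) ?S) (P y)" using P_nc[OF yW] cg_lmul by fastforce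
  have "pmul (P y) (pgen (Some v0, x)) \<in> IA" if "x \<in> W" for x
    unfolding P_def using that yW v0 nF by (intro id_rel lcr4) (auto simp: susp_V_iff susp_E_simps)
  then have "pmul (P y) ?S \<in> IA" unfolding pmul_sum_right by (rule id_sum)
  then show ?thesis using c cg_sym cg_in_ideal by blast
qed

definition k :: "'b \<Rightarrow> 'a option \<times> 'b \<Rightarrow> ('a option \<times> 'b) ncpoly" where
  "k y a = \<theta> y (g y a)"

lemma k_None: "k y (None, x) = (if x = y then pone else zp)"
  by (simp add: k_def g_None \<theta>_def ev_pone)
lemma k_Some: "y \<in> T \<Longrightarrow> k y (Some v, x) = (if x \<in> Nb y then pgen (Some v, x) else zp)"
  using theta_pgen[of y v] ti_tau[of y x] by (simp add: k_def g_Some \<theta>_def)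

lemma K: assumes y: "y \<in> T" and d: "d \<in> nc_polys GA"
  shows "cgA (pmul (P y) (\<theta> y (\<psi> y d))) (pmul (P y) d)"
proof -
  have yW: "y \<in> W" using y T_sub by blast
  have e: "\<theta> y (\<psi> y d) = ev (k y) d"
    unfolding \<theta>_def \<psi>_def k_def using fs_nc[OF d] fs_g by (simp add: ev_comp)
  have kn: "k y a \<in> nc_polys GA" if "a \<in> GA" for a
    using that Nb_sub by (cases a; cases "fst a") (auto simp: k_None k_Some[OF y] pgen_nc)
  have i: "cgA (pmul (P y) (k y a)) (pmul (P y) (pgen a))" if a: "a \<in> GA" for a
  proof (cases a)
    case (Pair ob x)
    show ?thesis
    proof (cases ob)
      case None
      show ?thesis
      proof (cases "x = y")
        case True
        have "psub (pmul (P y) (P y)) (P y) \<in> IA" unfolding P_def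
          using yW by (intro id_rel lcr2) (simp_all add: susp_V_iff)
        then have "cgA (pmul (P y) (P y)) (P y)" by (simp add: cg_def)
        then have "cgA (P y) (pmul (P y) (P y))" by (rule cg_sym)
        then show ?thesis using Pair None True by (simp add: k_None P_def)
      next
        case False
        have "pmul (P y) (pgen (None, x)) \<in> IA" unfolding P_def
          using yW a Pair None False by (intro id_rel lcr3) (auto simp: susp_V_iff)
        then show ?thesis using Pair None False cg_sym cg_zero_iff by (fastforce simp: k_None)
      qed
    next
      case (Some v)
      show ?thesis
      proof (cases "x \<in> Nb y")
        case True then show ?thesis using Pair Some by (simp add: k_Some[OF y] cg_refl)
      next
        case False
        have "pmul (P y) (pgen (Some v, x)) \<in> IA" unfolding P_def
          using yW a Pair Some False by (intro id_rel lcr4) (auto simp: susp_V_iff susp_E_simps Nb_iff)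
        then show ?thesis using Pair Some False cg_sym cg_zero_iff by (fastforce simp: k_Some[OF y])
      qed
    qed
  qed
  have ii: "cgA (pmul (P y) (k y a)) (pmul (k y a) (P y))" if a: "a \<in> GA" for a
  proof (cases a)
    case (Pair ob x)
    show ?thesis
    proof (cases ob)
      case None then show ?thesis using Pair by (simp add: k_None cg_refl)
    next
      case (Some v)
      show ?thesis
      proof (cases "x \<in> Nb y")
        case True
        have "(Some v, x) \<in> G0" using a Pair Some True Nb_sub by (auto simp: susp_V_def)
        then show ?thesis using Pair Some True P_comm_gen[OF yW] by (simp add: k_Some[OF y])
      next
        case False then show ?thesis using Pair Some by (simp add: k_Some[OF y] cg_refl)
      qed
    qed
  qed
  show ?thesis unfolding e by (rule cg_corner[OF P_nc[OF yW] kn i ii d])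
qed

lemma chi_phi: assumes d: "d \<in> nc_polys GA" shows "cgA (\<chi> (\<phi> d)) d"
proof -
  let ?ST = "\<lambda>w. \<Sum>y\<in>T. pmul (P y) d w"
  let ?SW = "\<lambda>w. \<Sum>y\<in>W. pmul (P y) d w"
  let ?SD = "\<lambda>w. \<Sum>y\<in>W - T. pmul (P y) d w"
  have "\<chi> (\<phi> d) = (\<lambda>w. \<Sum>y\<in>T. pmul (P y) (\<theta> y (\<psi> y d)) w)"
    unfolding \<chi>_def \<phi>_def by (rule ext, rule sum.cong) auto
  moreover have "cgA (\<lambda>w. \<Sum>y\<in>T. pmul (P y) (\<theta> y (\<psi> y d)) w) ?ST"
    using K d by (intro cg_sum) auto
  ultimately have c1: "cgA (\<chi> (\<phi> d)) ?ST" by simp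
  have SD: "?SD \<in> IA"
  proof (rule id_sum)
    fix y assume "y \<in> W - T"
    then have "P y \<in> IA" using P_ideal_iso T_ni by blast
    then show "pmul (P y) d \<in> IA" using d by (rule_tac id_rmul)
  qed
  have "psub ?ST ?SW = psmul (-1) ?SD"
  proof (rule ext)
    fix w
    have "?SW w = ?SD w + ?ST w" by (rule sum.subset_diff[OF T_sub finW])
    then show "psub ?ST ?SW w = psmul (-1) ?SD w" by (simp add: psub_def psmul_def)
  qed
  then have c2: "cgA ?ST ?SW" using SD by (simp add: cg_def id_smul)
  have "cgA (\<lambda>w. \<Sum>y\<in>W. P y w) pone"
    unfolding cg_def P_def by (intro id_rel lcr1) (simp add: susp_V_iff)
  then have "cgA (pmul (\<lambda>w. \<Sum>y\<in>W. P y w) d) (pmul pone d)" using d by (rule_tac cg_rmul)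
  then have c3: "cgA ?SW d" by (simp add: pmul_sum_left)
  show ?thesis using c1 c2 c3 cg_trans by blast
qed

lemma psi_theta: assumes y: "y \<in> T" and q: "q \<in> nc_polys (GB y)" shows "\<psi> y (\<theta> y q) = q"
proof -
  have "\<psi> y (\<theta> y q) = ev (\<lambda>a. \<psi> y (h y a)) q"
    unfolding \<theta>_def \<psi>_def using fs_nc[OF q] fs_h by (simp add: ev_comp)
  also have "\<dots> = ev pgen q"
  proof (rule ev_cong[OF q])
    fix a assume a: "a \<in> GB y"
    then obtain v x where ax: "a = (v, x)" "x \<in> N' y" by auto
    show "\<psi> y (h y a) = pgen a"
      using ax ti_in[OF y ax(2)] tau_ti[OF y ax(2)] by (simp add: h_def psi_pgen g_Some)
  qed
  also have "\<dots> = q" using fs_nc[OF q] by (rule ev_id)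
  finally show ?thesis .
qed

lemma psi_chi: assumes f: "\<And>y. y \<in> T \<Longrightarrow> f y \<in> nc_polys (GB y)" and y0: "y0 \<in> T"
  shows "\<psi> y0 (\<chi> f) = f y0"
proof -
  have fsy: "fs (pmul (P y) (\<theta> y (f y)))" if "y \<in> T" for y
    using that T_sub f by (intro fs_nc[of _ GA] pmul_nc P_nc theta_nc) auto
  have "\<psi> y0 (\<chi> f) = (\<lambda>z. \<Sum>y\<in>T. \<psi> y0 (pmul (P y) (\<theta> y (f y))) z)"
    unfolding \<chi>_def \<psi>_def using fsy by (simp add: ev_sum)
  also have "\<dots> = (\<lambda>z. \<Sum>y\<in>T. if y = y0 then f y0 z else 0)"
  proof (rule ext, rule sum.cong)
    fix z y assume y: "y \<in> T"
    have "fs (\<theta> y (f y))" using y f by (intro fs_nc[of _ GA] theta_nc) auto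
    then have "\<psi> y0 (pmul (P y) (\<theta> y (f y))) = pmul (g y0 (None, y)) (\<psi> y0 (\<theta> y (f y)))"
      unfolding \<psi>_def P_def by (simp add: ev_pmul ev_pgen)
    then show "\<psi> y0 (pmul (P y) (\<theta> y (f y))) z = (if y = y0 then f y0 z else 0)"
      using psi_theta[OF y0 f[OF y0]] by (simp add: g_None)
  qed simp
  also have "\<dots> = f y0" using finT y0 by simp
  finally show ?thesis .
qed

lemma B_qsub: "(qsub (dsum T (\<lambda>y. A_lc V E (N' y) (F' y))) f f' \<in> idl (dsum T (\<lambda>y. A_lc V E (N' y) (F' y))))
   \<longleftrightarrow> (\<forall>y\<in>T. psub (f y) (f' y) \<in> IB y)"
  by (simp add: dsum_qsub A_lc_def qsub_pres idl_pres)

lemma iso_inj: assumes an: "a \<in> nc_polys GA" "b \<in> nc_polys GA"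
  shows "psub a b \<in> IA \<longleftrightarrow> (\<forall>y\<in>T. psub (\<phi> a y) (\<phi> b y) \<in> IB y)"
proof -
  have dn: "psub a b \<in> nc_polys GA" using an by (rule psub_nc)
  have ps: "psub (\<phi> a y) (\<phi> b y) = \<psi> y (psub a b)" if "y \<in> T" for y
  proof -
    have "psub (\<phi> a y) (\<phi> b y) = psub (\<psi> y a) (\<psi> y b)" using that by (simp add: \<phi>_def)
    also have "\<dots> = \<psi> y (psub a b)" unfolding \<psi>_def
      by (rule ev_psub[symmetric]) (rule fs_nc, fact)+
    finally show ?thesis .
  qed
  show ?thesis
  proof
    assume h: "psub a b \<in> IA"
    show "\<forall>y\<in>T. psub (\<phi> a y) (\<phi> b y) \<in> IB y"
    proof
      fix y assume y: "y \<in> T"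
      have "\<psi> y (psub a b) \<in> IB y" unfolding \<psi>_def
      proof (rule ev_ideal[OF lc_rels_nc])
        show "\<And>x. x \<in> GA \<Longrightarrow> g y x \<in> nc_polys (GB y)" using y by (rule g_nc)
        show "\<And>r. r \<in> RA \<Longrightarrow> ev (g y) r \<in> IB y" using psi_rel[OF y] unfolding \<psi>_def .
        show "psub a b \<in> IA" by (rule h)
      qed
      then show "psub (\<phi> a y) (\<phi> b y) \<in> IB y" using ps[OF y] by simp
    qed
  next
    assume h: "\<forall>y\<in>T. psub (\<phi> a y) (\<phi> b y) \<in> IB y"
    have "\<chi> (\<phi> (psub a b)) \<in> IA"
    proof (rule chi_ideal)
      fix y assume y: "y \<in> T"
      have "\<phi> (psub a b) y = psub (\<phi> a y) (\<phi> b y)" using ps[OF y] y by (simp add: \<phi>_def)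
      then show "\<phi> (psub a b) y \<in> IB y" using h y by simp
    qed
    then show "psub a b \<in> IA" using chi_phi[OF dn] cg_sym cg_in_ideal by blast
  qed
qed

lemma iso: "qalg_iso (A_lc (susp_V V) (susp_E V E) W F) (dsum T (\<lambda>y. A_lc V E (N' y) (F' y)))"
proof -
  let ?A = "A_lc (susp_V V) (susp_E V E) W F"
  let ?B = "dsum T (\<lambda>y. A_lc V E (N' y) (F' y))"
  have A: "carr ?A = nc_polys GA" "idl ?A = IA" "plus ?A = padd" "mult ?A = pmul" "scal ?A = psmul"
    "unit ?A = pone" by (simp_all add: A_lc_def presented_def)
  have Aq: "\<And>a b. qsub ?A a b = psub a b" by (simp add: A_lc_def qsub_pres)
  have Bc: "carr ?B = {f. (\<forall>y\<in>T. f y \<in> nc_polys (GB y)) \<and> (\<forall>y. y \<notin> T \<longrightarrow> f y = undefined)}"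
    by (simp add: dsum_def A_lc_def presented_def)
  have Bops: "\<And>f f' y. y \<in> T \<Longrightarrow> plus ?B f f' y = padd (f y) (f' y)"
    "\<And>f f' y. y \<in> T \<Longrightarrow> mult ?B f f' y = pmul (f y) (f' y)"
    "\<And>c f y. y \<in> T \<Longrightarrow> scal ?B c f y = psmul c (f y)"
    "\<And>y. y \<in> T \<Longrightarrow> unit ?B y = pone"
    by (simp_all add: dsum_def A_lc_def presented_def)
  have phiT: "\<And>a y. y \<in> T \<Longrightarrow> \<phi> a y = \<psi> y a" by (simp add: \<phi>_def)
  have fsA: "\<And>a. a \<in> nc_polys GA \<Longrightarrow> fs a" by (rule fs_nc)
  show ?thesis unfolding qalg_iso_def
  proof (rule exI[of _ \<phi>], intro conjI ballI allI)
    fix a assume "a \<in> carr ?A"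
    then show "\<phi> a \<in> carr ?B" unfolding A Bc by (auto simp: \<phi>_def psi_nc)
  next
    fix a b assume a: "a \<in> carr ?A" and b: "b \<in> carr ?A"
    then have an: "a \<in> nc_polys GA" "b \<in> nc_polys GA" unfolding A(1) .
    show "qsub ?A a b \<in> idl ?A \<longleftrightarrow> qsub ?B (\<phi> a) (\<phi> b) \<in> idl ?B"
      unfolding Aq B_qsub using iso_inj[OF an(1,2)] A(2) by simp
  next
    fix f assume f: "f \<in> carr ?B"
    then have fy: "\<And>y. y \<in> T \<Longrightarrow> f y \<in> nc_polys (GB y)" unfolding Bc by blast
    have "\<chi> f \<in> nc_polys GA" unfolding \<chi>_def
      using fy T_sub by (intro sum_nc pmul_nc P_nc theta_nc) auto
    moreover have "qsub ?B (\<phi> (\<chi> f)) f \<in> idl ?B"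
      unfolding B_qsub using psi_chi[OF fy] by (simp add: phiT id_zero)
    ultimately show "\<exists>a\<in>carr ?A. qsub ?B (\<phi> a) f \<in> idl ?B" unfolding A by blast
  next
    fix a b assume "a \<in> carr ?A" "b \<in> carr ?A"
    then have "fs a" "fs b" unfolding A by (blast intro: fsA)+
    then show "qsub ?B (\<phi> (plus ?A a b)) (plus ?B (\<phi> a) (\<phi> b)) \<in> idl ?B"
      unfolding B_qsub by (simp add: A Bops phiT \<psi>_def ev_padd id_zero)
  next
    fix a b assume "a \<in> carr ?A" "b \<in> carr ?A"
    then have "fs a" "fs b" unfolding A by (blast intro: fsA)+
    then show "qsub ?B (\<phi> (mult ?A a b)) (mult ?B (\<phi> a) (\<phi> b)) \<in> idl ?B"
      unfolding B_qsub by (simp add: A Bops phiT \<psi>_def ev_pmul id_zero)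
  next
    fix c a assume "a \<in> carr ?A"
    then have "fs a" unfolding A by (blast intro: fsA)+
    then show "qsub ?B (\<phi> (scal ?A c a)) (scal ?B c (\<phi> a)) \<in> idl ?B"
      unfolding B_qsub by (simp add: A Bops phiT \<psi>_def ev_psmul id_zero)
  next
    show "qsub ?B (\<phi> (unit ?A)) (unit ?B) \<in> idl ?B"
      unfolding B_qsub by (simp add: A Bops phiT \<psi>_def ev_pone id_zero)
  qed
qed

end



lemma vt_bij:
  assumes gW: "graph W F" and s: "bij_betw s W W" and pres: "\<forall>a\<in>W. \<forall>b\<in>W. F a b \<longleftrightarrow> F (s a) (s b)"
    and y: "y \<in> W" and sy: "s y = y0"
  shows "bij_betw s (nbhd_V W F y) (nbhd_V W F y0)"
proof (rule bij_betw_subset[OF s])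
  show "nbhd_V W F y \<subseteq> W" by (auto simp: nbhd_V_def)
  show "s ` nbhd_V W F y = nbhd_V W F y0"
  proof
    show "s ` nbhd_V W F y \<subseteq> nbhd_V W F y0"
    proof
      fix z assume "z \<in> s ` nbhd_V W F y"
      then obtain x where x: "x \<in> W" "F y x" "z = s x" by (auto simp: nbhd_V_def)
      then have "F y0 z" using pres y sy by auto
      moreover have "z \<in> W" using x s by (auto simp: bij_betw_def)
      ultimately show "z \<in> nbhd_V W F y0" by (simp add: nbhd_V_def)
    qed
  next
    show "nbhd_V W F y0 \<subseteq> s ` nbhd_V W F y"
    proof
      fix z assume "z \<in> nbhd_V W F y0"
      then have z: "z \<in> W" "F y0 z" by (auto simp: nbhd_V_def)
      then obtain x where x: "x \<in> W" "z = s x" using s by (auto simp: bij_betw_def)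
      then have "F y x" using pres y sy z by auto
      then show "z \<in> s ` nbhd_V W F y" using x by (auto simp: nbhd_V_def)
    qed
  qed
qed

theorem mainTheorem20:
  fixes V :: "'a set" and E :: "'a \<Rightarrow> 'a \<Rightarrow> bool"
    and W :: "'b set" and F :: "'b \<Rightarrow> 'b \<Rightarrow> bool"
  assumes "graph V E" and "V \<noteq> {}" and "graph W F"
  shows "qalg_iso (A_lc (susp_V V) (susp_E V E) W F)
           (dsum (non_isolated W F) (\<lambda>y. A_lc V E (nbhd_V W F y) (nbhd_E W F y)))
     \<and> (vertex_transitive W F \<longrightarrow>
          (\<forall>y\<in>W. qalg_iso (A_lc (susp_V V) (susp_E V E) W F)
                    (dsum W (\<lambda>_. A_lc V E (nbhd_V W F y) (nbhd_E W F y)))))"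
proof (intro conjI impI ballI)
  have "cfg V E W F (non_isolated W F) (nbhd_V W F) (nbhd_E W F) (\<lambda>y. id)"
  proof
    show "non_isolated W F \<subseteq> W" by (auto simp: non_isolated_def)
    show "non_isolated W F \<subseteq> non_isolated W F" by simp
    fix y
    show "bij_betw id (nbhd_V W F y) (nbhd_V W F y)" by simp
    fix x1 x2
    assume "x1 \<in> nbhd_V W F y" "x2 \<in> nbhd_V W F y"
    then show "F x1 x2 \<longleftrightarrow> nbhd_E W F y (id x1) (id x2)" by (simp add: nbhd_E_def)
  qed (use assms in auto)
  then show "qalg_iso (A_lc (susp_V V) (susp_E V E) W F)
           (dsum (non_isolated W F) (\<lambda>y. A_lc V E (nbhd_V W F y) (nbhd_E W F y)))"
    by (rule cfg.iso)
next
  fix y0 assume vt: "vertex_transitive W F" and y0: "y0 \<in> W"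
  define \<sigma> where "\<sigma> y = (SOME s. bij_betw s W W \<and> (\<forall>a\<in>W. \<forall>b\<in>W. F a b \<longleftrightarrow> F (s a) (s b)) \<and> s y = y0)" for y
  have \<sigma>: "bij_betw (\<sigma> y) W W \<and> (\<forall>a\<in>W. \<forall>b\<in>W. F a b \<longleftrightarrow> F (\<sigma> y a) (\<sigma> y b)) \<and> \<sigma> y y = y0"
    if "y \<in> W" for y
  proof -
    have "\<exists>s. bij_betw s W W \<and> (\<forall>a\<in>W. \<forall>b\<in>W. F a b \<longleftrightarrow> F (s a) (s b)) \<and> s y = y0"
      using vt that y0 unfolding vertex_transitive_def by blast
    then show ?thesis unfolding \<sigma>_def by (rule someI_ex)
  qed
  have "cfg V E W F W (\<lambda>_. nbhd_V W F y0) (\<lambda>_. nbhd_E W F y0) \<sigma>"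
  proof
    show "non_isolated W F \<subseteq> W" by (auto simp: non_isolated_def)
    fix y assume y: "y \<in> W"
    show "bij_betw (\<sigma> y) (nbhd_V W F y) (nbhd_V W F y0)"
      using vt_bij[OF assms(3)] \<sigma>[OF y] y by blast
    fix x1 x2
    assume x: "x1 \<in> nbhd_V W F y" "x2 \<in> nbhd_V W F y"
    have "\<sigma> y x1 \<in> nbhd_V W F y0" "\<sigma> y x2 \<in> nbhd_V W F y0"
      using vt_bij[OF assms(3)] \<sigma>[OF y] y x by (meson bij_betwE)+
    moreover have "x1 \<in> W" "x2 \<in> W" using x by (auto simp: nbhd_V_def)
    ultimately show "F x1 x2 \<longleftrightarrow> nbhd_E W F y0 (\<sigma> y x1) (\<sigma> y x2)"
      using \<sigma>[OF y] by (simp add: nbhd_E_def)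
  qed (use assms in auto)
  then show "qalg_iso (A_lc (susp_V V) (susp_E V E) W F)
                    (dsum W (\<lambda>_. A_lc V E (nbhd_V W F y0) (nbhd_E W F y0)))"
    by (rule cfg.iso)
qed


end
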